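(* Let $V$ be a finite-dimensional vector space over an algebraically closed field $\mathbf{k}$ of characteristic $p$, of dimension $\mathbf{n}\ge3$, equipped with a bilinear form $(,)$ and a quadratic form $Q$ such that either (i) $Q=0$, $(x,x)=0$ for all $x$, and $V^\perp=0$; or (ii) $Q\ne0$, $(x,y)=Q(x+y)-Q(x)-Q(y)$ for all $x,y$, and $Q|_{V^\perp}$ is injective. Let $\kappa\in\{0,1\}$ with $\mathbf{n}-\kappa$ even, $n=(\mathbf{n}-\kappa)/2$. Let $p_1\ge\dots\ge p_\sigma\ge1$ be integers with sum $n$, and if $\kappa=1$ set $p_{\sigma+1}=1/2$. Let $g\in Is(V)$ and let $(w^t_i)$ be a $(g,p_* )$-adapted collection. Let $e\le f$ in $[1,\sigma+\kappa]$ and assume that the subspace $\mathcal{W}_{e,f}$ spanned by $\{w^x_i;\ x\in[e,f],\ i\in[0,2p_x-1]\}$ is $g$-stable. Then the radical of $(,)|_{\mathcal{W}_{e,f}}$ is $0$, unless $\kappa=1$, $f=\sigma+1$ and $p=2$, in which case this radical equals $V^\perp$.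
   Context: $V^\perp=\{x\in V;(x,V)=0\}$. $Is(V)$ is the group of $g\in GL(V)$ with $(gx,gy)=(x,y)$ and $Q(gx)=Q(x)$ for all $x,y$. A collection $w^t_i\in V$ ($t\in[1,\sigma+\kappa]$, $i\in\mathbb{Z}$) is $(g,p_* )$-adapted if: (a) $w^t_{i+1}=gw^t_i$; (b) for $t\in[1,\sigma]$, $(w^t_i,w^t_j)=0$ if $|i-j|<p_t$ and $=1$ if $j-i=p_t$; (c) $(w^t_i,w^r_j)=0$ if $0\le i-j+p_r<2p_t$ and $1\le t<r\le\sigma$; (d) if $\kappa=1$, $(w^{\sigma+1}_i,w^{\sigma+1}_i)=2$; (e) if $\kappa=1$, $(w^t_i,w^{\sigma+1}_j)=0$ whenever $0\le i-j<2p_t$, $1\le t\le\sigma$; (f) $Q(w^t_i)=0$ for $t\in[1,\sigma]$, and $Q(w^{\sigma+1}_i)=1$ if $\kappa=1$. *)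

theory Defs
  imports Main "HOL-Computational_Algebra.Polynomial"
begin

definition alg_closed :: "'k::field itself \<Rightarrow> bool" where
  "alg_closed _ \<longleftrightarrow> (\<forall>q :: 'k poly. degree q > 0 \<longrightarrow> (\<exists>x. poly q x = 0))"

definition bilinear_form :: "('k::field \<Rightarrow> 'v::ab_group_add \<Rightarrow> 'v) \<Rightarrow> ('v \<Rightarrow> 'v \<Rightarrow> 'k) \<Rightarrow> bool" where
  "bilinear_form scale B \<longleftrightarrow>
     (\<forall>x. Vector_Spaces.linear scale (*) (\<lambda>y. B x y)) \<and>
     (\<forall>y. Vector_Spaces.linear scale (*) (\<lambda>x. B x y))"

definition quadratic_form :: "('k::field \<Rightarrow> 'v::ab_group_add \<Rightarrow> 'v) \<Rightarrow> ('v \<Rightarrow> 'k) \<Rightarrow> bool" where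
  "quadratic_form scale Q \<longleftrightarrow>
     (\<forall>a x. Q (scale a x) = a^2 * Q x) \<and>
     bilinear_form scale (\<lambda>x y. Q (x + y) - Q x - Q y)"

definition Vperp :: "('v \<Rightarrow> 'v \<Rightarrow> 'k::zero) \<Rightarrow> 'v set" where
  "Vperp B = {x. \<forall>y. B x y = 0}"

definition radical_on :: "('v \<Rightarrow> 'v \<Rightarrow> 'k::zero) \<Rightarrow> 'v set \<Rightarrow> 'v set" where
  "radical_on B W = {x \<in> W. \<forall>y\<in>W. B x y = 0}"

definition isometry :: "('k::field \<Rightarrow> 'v::ab_group_add \<Rightarrow> 'v) \<Rightarrow> ('v \<Rightarrow> 'v \<Rightarrow> 'k) \<Rightarrow> ('v \<Rightarrow> 'k) \<Rightarrow> ('v \<Rightarrow> 'v) \<Rightarrow> bool" where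
  "isometry scale B Q g \<longleftrightarrow> Vector_Spaces.linear scale scale g \<and> bij g \<and>
     (\<forall>x y. B (g x) (g y) = B x y) \<and> (\<forall>x. Q (g x) = Q x)"

text \<open>(g,p_*)-adapted collection w t i, t in [1, sigma+kappa], i an integer.
  The parts p_t are given for t in [1,sigma]; p_(sigma+1) = 1/2 only enters via 2 p_(sigma+1) = 1.\<close>
definition adapted ::
  "('v \<Rightarrow> 'v \<Rightarrow> 'k::field) \<Rightarrow> ('v \<Rightarrow> 'k) \<Rightarrow> ('v \<Rightarrow> 'v) \<Rightarrow> nat \<Rightarrow> nat \<Rightarrow> (nat \<Rightarrow> nat)
     \<Rightarrow> (nat \<Rightarrow> int \<Rightarrow> 'v) \<Rightarrow> bool" where
  "adapted B Q g \<sigma> \<kappa> p w \<longleftrightarrow>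
     (\<forall>t\<in>{1..\<sigma>+\<kappa>}. \<forall>i. w t (i + 1) = g (w t i)) \<and>
     (\<forall>t\<in>{1..\<sigma>}. \<forall>i j. (\<bar>i - j\<bar> < int (p t) \<longrightarrow> B (w t i) (w t j) = 0) \<and>
                        (j - i = int (p t) \<longrightarrow> B (w t i) (w t j) = 1)) \<and>
     (\<forall>t r i j. 1 \<le> t \<and> t < r \<and> r \<le> \<sigma> \<and> 0 \<le> i - j + int (p r) \<and> i - j + int (p r) < 2 * int (p t)
                 \<longrightarrow> B (w t i) (w r j) = 0) \<and>
     (\<kappa> = 1 \<longrightarrow> (\<forall>i. B (w (\<sigma>+1) i) (w (\<sigma>+1) i) = 2)) \<and>
     (\<kappa> = 1 \<longrightarrow> (\<forall>t i j. 1 \<le> t \<and> t \<le> \<sigma> \<and> 0 \<le> i - j \<and> i - j < 2 * int (p t)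
                 \<longrightarrow> B (w t i) (w (\<sigma>+1) j) = 0)) \<and>
     (\<forall>t\<in>{1..\<sigma>}. \<forall>i. Q (w t i) = 0) \<and>
     (\<kappa> = 1 \<longrightarrow> (\<forall>i. Q (w (\<sigma>+1) i) = 1))"

definition twice_p :: "nat \<Rightarrow> (nat \<Rightarrow> nat) \<Rightarrow> nat \<Rightarrow> nat" where
  "twice_p \<sigma> p x = (if x \<le> \<sigma> then 2 * p x else 1)"

definition W_gens :: "nat \<Rightarrow> (nat \<Rightarrow> nat) \<Rightarrow> (nat \<Rightarrow> int \<Rightarrow> 'v) \<Rightarrow> nat \<Rightarrow> nat \<Rightarrow> 'v set" where
  "W_gens \<sigma> p w e f = {w x (int i) | x i. x \<in> {e..f} \<and> i < twice_p \<sigma> p x}"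

end

theory Submission
  imports Defs
begin

lemma meas1: "(a::nat) < b \<Longrightarrow> t < F \<Longrightarrow> a * F + t < b * F + r"
proof -
  assume "a < b" "t < F"
  then have "(a+1)*F \<le> b*F" by (intro mult_le_mono1) simp
  then show ?thesis using \<open>t < F\<close> by (simp add: algebra_simps)
qed

lemma meas2: "(a::nat) \<le> b \<Longrightarrow> t < r \<Longrightarrow> a * F + t < b * F + r"
proof -
  assume "a \<le> b" "t < r"
  then have "a*F \<le> b*F" by (simp add: mult_le_mono1)
  then show ?thesis using \<open>t < r\<close> by linarith
qed

lemma core:
  fixes G :: "nat \<Rightarrow> nat \<Rightarrow> nat \<Rightarrow> nat \<Rightarrow> 'k::field" and P :: "nat \<Rightarrow> nat"
    and c :: "nat \<times> nat \<Rightarrow> 'k"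
  assumes A: "\<And>t i j. e \<le> t \<Longrightarrow> t \<le> f \<Longrightarrow> \<bar>int i - int j\<bar> < int (P t) \<Longrightarrow> G t i t j = 0"
  and B1: "\<And>t i. e \<le> t \<Longrightarrow> t \<le> f \<Longrightarrow> G t i t (i + P t) = 1"
  and B2: "\<And>t i. e \<le> t \<Longrightarrow> t \<le> f \<Longrightarrow> G t (i + P t) t i = \<epsilon>"
  and C1: "\<And>t r i j. e \<le> t \<Longrightarrow> t < r \<Longrightarrow> r \<le> f \<Longrightarrow> 0 \<le> int i - int j + int (P r) \<Longrightarrow>
             int i - int j + int (P r) < 2 * int (P t) \<Longrightarrow> G t i r j = 0"
  and C2: "\<And>t r i j. e \<le> t \<Longrightarrow> t < r \<Longrightarrow> r \<le> f \<Longrightarrow> 0 \<le> int i - int j + int (P r) \<Longrightarrow>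
             int i - int j + int (P r) < 2 * int (P t) \<Longrightarrow> G r j t i = 0"
  and D: "\<And>t r. e \<le> t \<Longrightarrow> t < r \<Longrightarrow> r \<le> f \<Longrightarrow> P r \<le> P t"
  and eps: "\<epsilon> \<noteq> 0"
  and eq: "\<And>r j. e \<le> r \<Longrightarrow> r \<le> f \<Longrightarrow> j < 2 * P r \<Longrightarrow>
      (\<Sum>k\<in>Sigma {e..f} (\<lambda>t. {..<2 * P t}). c k * G (fst k) (snd k) r j) = 0"
  shows "\<And>t i. e \<le> t \<Longrightarrow> t \<le> f \<Longrightarrow> i < 2 * P t \<Longrightarrow> c (t,i) = 0"
proof -
  define I where "I = Sigma {e..f} (\<lambda>t. {..<2 * P t})"
  have finI: "finite I" unfolding I_def by auto
  define F where "F = f + 1"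
  have step1: "c (r, j + P r) = 0" if "(P r - j) * F + r = n" "e \<le> r" "r \<le> f" "j < P r" for n r j
    using that
  proof (induction n arbitrary: r j rule: less_induct)
    case (less n r j)
    have r: "e \<le> r" "r \<le> f" "j < P r" and mu: "(P r - j) * F + r = n" using less.prems by auto
    note IH = less.IH
    have mem: "(r, j + P r) \<in> I" using r by (auto simp: I_def)
    have zero: "c k * G (fst k) (snd k) r j = 0" if k: "k \<in> I - {(r, j + P r)}" for k
    proof -
      obtain t i where kk: "k = (t,i)" by (cases k)
      have t: "e \<le> t" "t \<le> f" "i < 2 * P t" and ne: "(t,i) \<noteq> (r, j + P r)"
        using k kk by (auto simp: I_def)
      have tF: "t < F" "r < F" using t r by (auto simp: F_def)
      show ?thesis
      proof (cases "i < P t")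
        case True
        have "G t i r j = 0"
        proof (cases t r rule: linorder_cases)
          case less
          then have "P r \<le> P t" using D t r by auto
          then show ?thesis using C1[of t r i j] t r True less by linarith
        next
          case equal
          have "i < P r" using equal True by simp
          then have "\<bar>int i - int j\<bar> < int (P r)" using r by linarith
          then show ?thesis using A[of r i j] r equal by simp
        next
          case greater
          then have "P t \<le> P r" using D t r by auto
          then show ?thesis using C2[of r t j i] t r True greater by linarith
        qed
        then show ?thesis by (simp add: kk)
      next
        case False
        define k' where "k' = i - P t"
        have ik: "i = k' + P t" "k' < P t" using False t by (auto simp: k'_def)
        show ?thesis
        proof (cases "(P t - k') * F + t < n")
          case True
          then have "c (t, k' + P t) = 0" using IH[of _ t k'] t ik by auto
          then show ?thesis by (simp add: kk ik)
        next
          case nlt: False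
          have "G t i r j = 0"
          proof (cases t r rule: linorder_cases)
            case less
            have "\<not> P t - k' \<le> P r - j" using meas2[of "P t - k'" "P r - j" t r F] less nlt mu by auto
            then show ?thesis using C1[of t r i j] t r ik less by linarith
          next
            case equal
            have "\<not> P t - k' < P r - j" using meas1[of "P t - k'" "P r - j" t F r] tF nlt mu by auto
            then have "k' < j" using equal ne ik by auto
            moreover have "k' < P r" "i = k' + P r" using equal ik by auto
            ultimately have "\<bar>int i - int j\<bar> < int (P r)" using r by linarith
            then show ?thesis using A[of r i j] r equal by simp
          next
            case greater
            have "\<not> P t - k' < P r - j" using meas1[of "P t - k'" "P r - j" t F r] tF nlt mu by auto
            moreover have "P t \<le> P r" using D t r greater by auto
            ultimately show ?thesis using C2[of r t j i] t r ik greater by linarith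
          qed
          then show ?thesis by (simp add: kk)
        qed
      qed
    qed
    have s0: "(\<Sum>k\<in>I - {(r, j + P r)}. c k * G (fst k) (snd k) r j) = 0"
      using zero by (intro sum.neutral) blast
    have "(\<Sum>k\<in>I. c k * G (fst k) (snd k) r j) = c (r, j + P r) * G r (j + P r) r j"
      using finI mem s0 by (simp add: sum.remove)
    then have "c (r, j + P r) * \<epsilon> = 0" using eq[of r j] r B2[of r j] by (simp add: I_def)
    then show ?case using eps by simp
  qed
  have step2: "c (r, j) = 0" if "(j + P e - P r) * F + (f - r) = n" "e \<le> r" "r \<le> f" "j < P r" for n r j
    using that
  proof (induction n arbitrary: r j rule: less_induct)
    case (less n r j)
    have r: "e \<le> r" "r \<le> f" "j < P r" and mu: "(j + P e - P r) * F + (f - r) = n" using less.prems by auto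
    note IH = less.IH
    have mem: "(r, j) \<in> I" using r by (auto simp: I_def)
    have Per: "P r \<le> P e" using D[of e r] r by (cases "e = r") auto
    have zero: "c k * G (fst k) (snd k) r (j + P r) = 0" if k: "k \<in> I - {(r, j)}" for k
    proof -
      obtain t i where kk: "k = (t,i)" by (cases k)
      have t: "e \<le> t" "t \<le> f" "i < 2 * P t" and ne: "(t,i) \<noteq> (r, j)"
        using k kk by (auto simp: I_def)
      have Pet: "P t \<le> P e" using D[of e t] t by (cases "e = t") auto
      have tF: "f - t < F" "f - r < F" using t r by (auto simp: F_def)
      show ?thesis
      proof (cases "i < P t")
        case False
        define k' where "k' = i - P t"
        have ik: "i = k' + P t" "k' < P t" using False t by (auto simp: k'_def)
        have "c (t, k' + P t) = 0" using step1[OF refl, of t k'] t ik by auto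
        then show ?thesis by (simp add: kk ik)
      next
        case True
        show ?thesis
        proof (cases "(i + P e - P t) * F + (f - t) < n")
          case True
          then have "c (t, i) = 0" by (rule IH[OF _ refl]) (use t \<open>i < P t\<close> in auto)
          then show ?thesis by (simp add: kk)
        next
          case nlt: False
          have "G t i r (j + P r) = 0"
          proof (cases t r rule: linorder_cases)
            case less
            have "f - r < f - t" using less t r by auto
            then have "\<not> i + P e - P t < j + P e - P r"
              using meas1[of "i + P e - P t" "j + P e - P r" "f - t" F "f - r"] tF nlt mu by auto
            moreover have "P r \<le> P t" using D t r less by auto
            ultimately show ?thesis using C1[of t r i "j + P r"] t r less Pet Per True by linarith
          next
            case equal
            have "\<not> i + P e - P t < j + P e - P r"
              using meas1[of "i + P e - P t" "j + P e - P r" "f - t" F "f - r"] tF nlt mu by auto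
            then have "j < i" using equal ne Pet by auto
            moreover have "i < P r" using equal True by simp
            ultimately have "\<bar>int i - int (j + P r)\<bar> < int (P r)" using r by linarith
            then show ?thesis using A[of r i "j + P r"] r equal by simp
          next
            case greater
            have "f - t < f - r" using greater t r by auto
            then have "\<not> i + P e - P t \<le> j + P e - P r"
              using meas2[of "i + P e - P t" "j + P e - P r" "f - t" "f - r" F] nlt mu by auto
            then show ?thesis using C2[of r t "j + P r" i] t r greater Pet Per True by linarith
          qed
          then show ?thesis by (simp add: kk)
        qed
      qed
    qed
    have s0: "(\<Sum>k\<in>I - {(r, j)}. c k * G (fst k) (snd k) r (j + P r)) = 0"
      using zero by (intro sum.neutral) blast
    have "(\<Sum>k\<in>I. c k * G (fst k) (snd k) r (j + P r)) = c (r, j) * G r j r (j + P r)"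
      using finI mem s0 by (simp add: sum.remove)
    then have "c (r, j) = 0" using eq[of r "j + P r"] r B1[of r j] by (simp add: I_def)
    then show ?case .
  qed
  fix t i assume "e \<le> t" "t \<le> f" "i < 2 * P t"
  then show "c (t, i) = 0"
    using step1[OF refl, of t "i - P t"] step2[OF refl, of t i]
    by (cases "i < P t") auto
qed


context vector_space begin

lemma lin_sum:
  assumes "Vector_Spaces.linear scale (*) h" "finite A"
  shows "h (\<Sum>a\<in>A. scale (c a) (v a)) = (\<Sum>a\<in>A. c a * h (v a))"
proof -
  have add: "\<And>x y. h (x + y) = h x + h y" and sc: "\<And>a x. h (scale a x) = a * h x"
    using assms(1) by (auto simp: Vector_Spaces.linear_iff)
  have z: "h 0 = 0" using sc[of 0 0] by simp
  show ?thesis using assms(2) by (induction A) (auto simp: add sc z)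
qed

lemma span_image_sum:
  assumes "finite I"
  shows "span (\<phi> ` I) = {\<Sum>k\<in>I. scale (c k) (\<phi> k) | c. True}"
proof
  show "span (\<phi> ` I) \<subseteq> {\<Sum>k\<in>I. scale (c k) (\<phi> k) | c. True}"
  proof
    fix x assume "x \<in> span (\<phi> ` I)"
    then show "x \<in> {\<Sum>k\<in>I. scale (c k) (\<phi> k) | c. True}"
    proof (induction rule: span_induct_alt)
      case base
      then show ?case by (auto intro!: exI[of _ "\<lambda>_. 0"])
    next
      case (step a x y)
      then obtain k0 where k0: "k0 \<in> I" "x = \<phi> k0" by auto
      from step obtain c where c: "y = (\<Sum>k\<in>I. scale (c k) (\<phi> k))" by auto
      have "(\<Sum>k\<in>I. scale (c k + (if k = k0 then a else 0)) (\<phi> k))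
          = (\<Sum>k\<in>I. scale (c k) (\<phi> k)) + (\<Sum>k\<in>I. (if k = k0 then scale a (\<phi> k) else 0))"
        by (simp add: scale_left_distrib sum.distrib if_distrib[of "\<lambda>r. scale r v" for v] cong: if_cong)
      also have "\<dots> = y + scale a x" using k0 assms c by (simp add: sum.delta')
      finally show ?case by (auto simp: add.commute intro!: exI[of _ "\<lambda>k. c k + (if k = k0 then a else 0)"])
    qed
  qed
  show "{\<Sum>k\<in>I. scale (c k) (\<phi> k) | c. True} \<subseteq> span (\<phi> ` I)"
  proof
    fix x assume "x \<in> {\<Sum>k\<in>I. scale (c k) (\<phi> k) | c. True}"
    then obtain c where "x = (\<Sum>k\<in>I. scale (c k) (\<phi> k))" by auto
    have "(\<Sum>k\<in>I. scale (c k) (\<phi> k)) \<in> span (\<phi> ` I)"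
      by (rule span_sum, rule span_scale, rule span_base) auto
    then show "x \<in> span (\<phi> ` I)" using \<open>x = _\<close> by simp
  qed
qed

lemma main_vs:
  fixes B :: "'b \<Rightarrow> 'b \<Rightarrow> 'a" and Q :: "'b \<Rightarrow> 'a"
    and N \<kappa> \<sigma> :: nat and p :: "nat \<Rightarrow> nat"
    and g :: "'b \<Rightarrow> 'b" and w :: "nat \<Rightarrow> int \<Rightarrow> 'b" and e f :: nat
  assumes dim: "dim (UNIV :: 'b set) = N" and N3: "N \<ge> 3"
    and bil: "bilinear_form scale B" and quad: "quadratic_form scale Q"
    and cases: "(Q = (\<lambda>_. 0) \<and> (\<forall>x. B x x = 0) \<and> Vperp B = {0}) \<or>
                (Q \<noteq> (\<lambda>_. 0) \<and> (\<forall>x y. B x y = Q (x + y) - Q x - Q y) \<and> inj_on Q (Vperp B))"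
    and kappa: "\<kappa> \<in> {0, 1}" and even: "even (N - \<kappa>)"
    and pdec: "\<forall>t\<in>{1..<\<sigma>}. p (t + 1) \<le> p t"
    and psum: "(\<Sum>t\<in>{1..\<sigma>}. p t) = (N - \<kappa>) div 2"
    and adp: "adapted B Q g \<sigma> \<kappa> p w"
    and ef: "1 \<le> e" "e \<le> f" "f \<le> \<sigma> + \<kappa>"
  shows "radical_on B (span (W_gens \<sigma> p w e f)) =
           (if \<kappa> = 1 \<and> f = \<sigma> + 1 \<and> CHAR('a) = 2 then Vperp B else {0})"
proof -
  define \<phi> where "\<phi> = (\<lambda>k::nat\<times>nat. w (fst k) (int (snd k)))"
  define Is where "Is = (\<lambda>a b. Sigma {a..b::nat} (\<lambda>t. {..<2 * p t}))"
  have finIs: "\<And>a b. finite (Is a b)" unfolding Is_def by auto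
  have linL: "\<And>z. Vector_Spaces.linear scale (*) (\<lambda>x. B x z)"
    and linR: "\<And>x. Vector_Spaces.linear scale (*) (\<lambda>z. B x z)"
    using bil by (auto simp: bilinear_form_def)
  have BaddL: "\<And>x y z. B (x + y) z = B x z + B y z" and BscL: "\<And>a x z. B (scale a x) z = a * B x z"
    using linL by (auto simp: Vector_Spaces.linear_iff)
  have BaddR: "\<And>x y z. B z (x + y) = B z x + B z y" and BscR: "\<And>a x z. B z (scale a x) = a * B z x"
    using linR by (auto simp: Vector_Spaces.linear_iff)
  have B0: "\<And>z. B 0 z = 0" using BscL[of 0 0] by simp
  obtain \<epsilon> where eps: "\<epsilon> \<noteq> 0" and epsB: "\<And>x y. B y x = \<epsilon> * B x y"
  proof (cases "\<forall>x. B x x = 0")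
    case True
    have h: "B y x = (- 1) * B x y" for x y
    proof -
      have "B (x + y) (x + y) = B x x + B x y + B y x + B y y" by (simp add: BaddL BaddR)
      then have "B x y + B y x = 0" using True by simp
      then show ?thesis by (simp add: add_eq_0_iff)
    qed
    show ?thesis by (rule that[of "-1"]) (simp, rule h)
  next
    case False
    then have Bq: "\<forall>x y. B x y = Q (x + y) - Q x - Q y" using cases by blast
    have h: "B y x = 1 * B x y" for x y using Bq[rule_format, of x y] Bq[rule_format, of y x] by (simp add: add.commute)
    show ?thesis by (rule that[of 1]) (simp, rule h)
  qed
  have ad_b: "\<And>t i j. t \<in> {1..\<sigma>} \<Longrightarrow> \<bar>i - j\<bar> < int (p t) \<Longrightarrow> B (w t i) (w t j) = 0"
    and ad_b1: "\<And>t i j. t \<in> {1..\<sigma>} \<Longrightarrow> j - i = int (p t) \<Longrightarrow> B (w t i) (w t j) = 1"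
    and ad_c: "\<And>t r i j. 1 \<le> t \<Longrightarrow> t < r \<Longrightarrow> r \<le> \<sigma> \<Longrightarrow> 0 \<le> i - j + int (p r) \<Longrightarrow>
                 i - j + int (p r) < 2 * int (p t) \<Longrightarrow> B (w t i) (w r j) = 0"
    and ad_d: "\<kappa> = 1 \<Longrightarrow> B (w (\<sigma>+1) 0) (w (\<sigma>+1) 0) = 2"
    and ad_e: "\<And>t i j. \<kappa> = 1 \<Longrightarrow> 1 \<le> t \<Longrightarrow> t \<le> \<sigma> \<Longrightarrow> 0 \<le> i - j \<Longrightarrow> i - j < 2 * int (p t)
                 \<Longrightarrow> B (w t i) (w (\<sigma>+1) j) = 0"
    and ad_q: "\<kappa> = 1 \<Longrightarrow> Q (w (\<sigma>+1) 0) = 1"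
    using adp unfolding adapted_def by blast+
  have Dmono0: "p (t + d) \<le> p t" if "1 \<le> t" "t + d \<le> \<sigma>" for t d
    using that
  proof (induction d)
    case 0 then show ?case by simp
  next
    case (Suc d)
    then have "t + d \<in> {1..<\<sigma>}" by auto
    then have "p (t + d + 1) \<le> p (t + d)" using pdec by blast
    then show ?case using Suc by simp
  qed
  have Dmono: "\<And>t r. 1 \<le> t \<Longrightarrow> t < r \<Longrightarrow> r \<le> \<sigma> \<Longrightarrow> p r \<le> p t"
  proof -
    fix t r :: nat assume "1 \<le> t" "t < r" "r \<le> \<sigma>"
    then show "p r \<le> p t" using Dmono0[of t "r - t"] by simp
  qed
  have radz: "c k = 0" if ab: "1 \<le> a" "b \<le> \<sigma>"
     and hyp: "\<And>m. m \<in> Is a b \<Longrightarrow> B (\<Sum>k\<in>Is a b. scale (c k) (\<phi> k)) (\<phi> m) = 0"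
     and k: "k \<in> Is a b" for a b c k
  proof -
    obtain t i where kk: "k = (t, i)" by (cases k)
    have ti: "a \<le> t" "t \<le> b" "i < 2 * p t" using k kk by (auto simp: Is_def)
    have "c (t, i) = 0"
    proof (rule core[where e=a and f=b and G="\<lambda>t i r j. B (w t (int i)) (w r (int j))" and P=p and \<epsilon>=\<epsilon> and c=c])
      show "B (w t (int i)) (w t (int j)) = 0" if "a \<le> t" "t \<le> b" "\<bar>int i - int j\<bar> < int (p t)" for t i j
        using ad_b[of t "int i" "int j"] that ab by auto
      show "B (w t (int i)) (w t (int (i + p t))) = 1" if "a \<le> t" "t \<le> b" for t i
      proof -
        have "t \<in> {1..\<sigma>}" using that ab by auto
        from ad_b1[where t=t and i="int i" and j="int i + int (p t)", OF this] show ?thesis by simp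
      qed
      show "B (w t (int (i + p t))) (w t (int i)) = \<epsilon>" if "a \<le> t" "t \<le> b" for t i
      proof -
        have "t \<in> {1..\<sigma>}" using that ab by auto
        from ad_b1[where t=t and i="int i" and j="int i + int (p t)", OF this] show ?thesis using epsB[where x="w t (int i)" and y="w t (int (i + p t))"] by simp
      qed
      show "B (w t (int i)) (w r (int j)) = 0" if "a \<le> t" "t < r" "r \<le> b" "0 \<le> int i - int j + int (p r)"
        "int i - int j + int (p r) < 2 * int (p t)" for t r i j
        using ad_c[of t r "int i" "int j"] that ab by auto
      show "B (w r (int j)) (w t (int i)) = 0" if "a \<le> t" "t < r" "r \<le> b" "0 \<le> int i - int j + int (p r)"
        "int i - int j + int (p r) < 2 * int (p t)" for t r i j
        using ad_c[of t r "int i" "int j"] that ab epsB[where x="w t (int i)" and y="w r (int j)"] by auto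
      show "p r \<le> p t" if "a \<le> t" "t < r" "r \<le> b" for t r
        using Dmono that ab by auto
      show "\<epsilon> \<noteq> 0" by (fact eps)
      show "(\<Sum>k\<in>Sigma {a..b} (\<lambda>t. {..<2 * p t}). c k * B (w (fst k) (int (snd k))) (w r (int j))) = 0"
        if "a \<le> r" "r \<le> b" "j < 2 * p r" for r j
      proof -
        have "B (\<Sum>k\<in>Is a b. scale (c k) (\<phi> k)) (\<phi> (r, j)) = (\<Sum>k\<in>Is a b. c k * B (\<phi> k) (\<phi> (r,j)))"
          by (rule lin_sum[OF linL finIs])
        moreover have "(r, j) \<in> Is a b" using that by (auto simp: Is_def)
        ultimately show ?thesis using hyp[of "(r,j)"] by (simp add: Is_def \<phi>_def)
      qed
    qed (use ti in auto)
    then show ?thesis by (simp add: kk)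
  qed
  have spanI: "\<And>a b. span (\<phi> ` Is a b) = {\<Sum>k\<in>Is a b. scale (c k) (\<phi> k) | c. True}"
    by (rule span_image_sum[OF finIs])
  have Wg1: "W_gens \<sigma> p w e f = \<phi> ` Is e f" if "f \<le> \<sigma>"
    using that unfolding W_gens_def twice_p_def Is_def \<phi>_def image_iff
    apply auto
    subgoal for x i by (rule image_eqI[where x="(x,i)"]) auto
    subgoal for a b by (rule exI[of _ a]) auto
    done
  have Wg2: "W_gens \<sigma> p w e f = insert (w (\<sigma>+1) 0) (\<phi> ` Is e \<sigma>)" if "f = \<sigma> + 1"
  proof (rule set_eqI, rule iffI)
    fix v assume "v \<in> W_gens \<sigma> p w e f"
    then obtain x i where v: "v = w x (int i)" "x \<in> {e..f}" "i < twice_p \<sigma> p x"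
      unfolding W_gens_def by blast
    show "v \<in> insert (w (\<sigma>+1) 0) (\<phi> ` Is e \<sigma>)"
    proof (cases "x \<le> \<sigma>")
      case True
      then have "(x, i) \<in> Is e \<sigma>" using v by (auto simp: Is_def twice_p_def)
      then have "\<phi> (x, i) \<in> \<phi> ` Is e \<sigma>" by (rule imageI)
      then show ?thesis using v by (simp add: \<phi>_def)
    next
      case False
      then have "x = \<sigma> + 1" "i = 0" using v that by (auto simp: twice_p_def)
      then show ?thesis using v by simp
    qed
  next
    fix v assume "v \<in> insert (w (\<sigma>+1) 0) (\<phi> ` Is e \<sigma>)"
    then consider "v = w (\<sigma>+1) (int 0)" | t i where "v = w t (int i)" "e \<le> t" "t \<le> \<sigma>" "i < 2 * p t"
      by (auto simp: Is_def \<phi>_def)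
    then show "v \<in> W_gens \<sigma> p w e f"
    proof cases
      case 1
      then show ?thesis unfolding W_gens_def using that ef by (force simp: twice_p_def)
    next
      case (2 t i)
      then show ?thesis unfolding W_gens_def using that ef by (force simp: twice_p_def)
    qed
  qed
  show ?thesis
  proof (cases "\<kappa> = 1 \<and> f = \<sigma> + 1")
    case False
    then have fs: "f \<le> \<sigma>" using kappa ef by auto
    have "radical_on B (span (W_gens \<sigma> p w e f)) = {0}"
    proof
      show "radical_on B (span (W_gens \<sigma> p w e f)) \<subseteq> {0}"
      proof
        fix x assume x: "x \<in> radical_on B (span (W_gens \<sigma> p w e f))"
        then have xs: "x \<in> span (\<phi> ` Is e f)" and xB: "\<And>y. y \<in> span (\<phi> ` Is e f) \<Longrightarrow> B x y = 0"
          by (auto simp: radical_on_def Wg1[OF fs])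
        from xs obtain c where xc: "x = (\<Sum>k\<in>Is e f. scale (c k) (\<phi> k))" by (auto simp: spanI)
        have "c k = 0" if "k \<in> Is e f" for k
        proof (rule radz[OF ef(1) fs _ that])
          fix m assume m: "m \<in> Is e f"
          have "B x (\<phi> m) = 0" by (rule xB, rule span_base) (use m in auto)
          then show "B (\<Sum>k\<in>Is e f. scale (c k) (\<phi> k)) (\<phi> m) = 0" using xc by simp
        qed
        then show "x \<in> {0}" using xc by simp
      qed
      show "{0} \<subseteq> radical_on B (span (W_gens \<sigma> p w e f))"
        using B0 span_zero by (auto simp: radical_on_def)
    qed
    moreover have "\<not> (\<kappa> = 1 \<and> f = \<sigma> + 1 \<and> CHAR('a) = 2)" using False by blast
    ultimately show ?thesis by (simp only: if_False)
  next
    case True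
    then have k1: "\<kappa> = 1" and f1: "f = \<sigma> + 1" by auto
    define u where "u = w (\<sigma>+1) 0"
    have Wg: "W_gens \<sigma> p w e f = insert u (\<phi> ` Is e \<sigma>)" using Wg2[OF f1] by (simp add: u_def)
    have Buu: "B u u = 2" using ad_d k1 by (simp add: u_def)
    have Q0: "Q 0 = 0"
    proof -
      have "Q (scale 0 0) = 0^2 * Q 0" using quad by (simp only: quadratic_form_def)
      then show ?thesis by simp
    qed
    have u0: "u \<noteq> 0" using ad_q k1 Q0 by (auto simp: u_def)
    have Bku: "B (\<phi> k) u = 0" if "k \<in> Is 1 \<sigma>" for k
    proof -
      obtain t i where kk: "k = (t, i)" by (cases k)
      have ti: "1 \<le> t" "t \<le> \<sigma>" "i < 2 * p t" using that kk by (auto simp: Is_def)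
      have "B (w t (int i)) (w (\<sigma>+1) 0) = 0"
        by (rule ad_e[OF k1 ti(1) ti(2)]) (use ti in auto)
      then show ?thesis by (simp add: kk \<phi>_def u_def)
    qed
    have Buk: "B u (\<phi> k) = 0" if "k \<in> Is 1 \<sigma>" for k
      using epsB[where x="\<phi> k" and y=u] Bku[OF that] by simp
    have IsSub: "\<And>a b. 1 \<le> a \<Longrightarrow> b \<le> \<sigma> \<Longrightarrow> Is a b \<subseteq> Is 1 \<sigma>" by (auto simp: Is_def)
    have decomp: "\<exists>s c. x = scale s u + (\<Sum>k\<in>Is a b. scale (c k) (\<phi> k))"
      if "x \<in> span (insert u (\<phi> ` Is a b))" for x a b
    proof -
      from that obtain s where "x - scale s u \<in> span (\<phi> ` Is a b)" by (auto simp: span_insert)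
      then obtain c where "x - scale s u = (\<Sum>k\<in>Is a b. scale (c k) (\<phi> k))" by (auto simp: spanI)
      then have "x = scale s u + (\<Sum>k\<in>Is a b. scale (c k) (\<phi> k))" by (metis diff_add_cancel add.commute)
      then show ?thesis by blast
    qed
    have sumBu: "B (\<Sum>k\<in>Is a b. scale (c k) (\<phi> k)) u = 0" if ab: "1 \<le> a" "b \<le> \<sigma>" for a b c
    proof -
      have "B (\<Sum>k\<in>Is a b. scale (c k) (\<phi> k)) u = (\<Sum>k\<in>Is a b. c k * B (\<phi> k) u)"
        by (rule lin_sum[OF linL finIs])
      also have "\<dots> = 0"
      proof (rule sum.neutral, rule ballI)
        fix k assume "k \<in> Is a b"
        then have "k \<in> Is 1 \<sigma>" using IsSub[OF ab] by blast
        then show "c k * B (\<phi> k) u = 0" using Bku by simp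
      qed
      finally show ?thesis .
    qed
    have Bdec: "B (scale s u + y) (\<phi> m) = B y (\<phi> m)" if "m \<in> Is 1 \<sigma>" for s y m
      using Buk[OF that] by (simp add: BaddL BscL)
    show ?thesis
    proof (cases "CHAR('a) = 2")
      case False
      have two: "(2::'a) \<noteq> 0"
      proof
        assume "(2::'a) = 0"
        then have "of_nat 2 = (0::'a)" by simp
        then have d: "CHAR('a) dvd 2" by (simp only: of_nat_eq_0_iff_char_dvd)
        have c1: "CHAR('a) \<noteq> 1" using of_nat_eq_0_iff_char_dvd[of 1, where 'a='a] by auto
        have c0: "CHAR('a) \<noteq> 0"
        proof
          assume "CHAR('a) = 0" then show False using d by simp
        qed
        have "CHAR('a) \<le> 2" using d by (rule dvd_imp_le) simp
        then show False using c0 c1 False by linarith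
      qed
      have "radical_on B (span (W_gens \<sigma> p w e f)) = {0}"
      proof
        show "radical_on B (span (W_gens \<sigma> p w e f)) \<subseteq> {0}"
        proof
          fix x assume x: "x \<in> radical_on B (span (W_gens \<sigma> p w e f))"
          then have xs: "x \<in> span (insert u (\<phi> ` Is e \<sigma>))"
            and xB: "\<And>y. y \<in> span (insert u (\<phi> ` Is e \<sigma>)) \<Longrightarrow> B x y = 0"
            by (auto simp: radical_on_def Wg)
          obtain s c where xc: "x = scale s u + (\<Sum>k\<in>Is e \<sigma>. scale (c k) (\<phi> k))"
            using decomp[OF xs] by blast
          have "B x u = 0" by (rule xB, rule span_base) simp
          moreover have "B x u = s * 2"
            using xc sumBu[OF ef(1) order_refl, of c] Buu by (simp add: BaddL BscL)
          ultimately have s0: "s = 0" using two by simp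
          have "c k = 0" if "k \<in> Is e \<sigma>" for k
          proof (rule radz[OF ef(1) order_refl _ that])
            fix m assume m: "m \<in> Is e \<sigma>"
            have "B x (\<phi> m) = 0" by (rule xB, rule span_base) (use m in auto)
            moreover have "m \<in> Is 1 \<sigma>" using IsSub[OF ef(1) order_refl] m by auto
            ultimately show "B (\<Sum>k\<in>Is e \<sigma>. scale (c k) (\<phi> k)) (\<phi> m) = 0" using Bdec xc by simp
          qed
          then show "x \<in> {0}" using xc s0 by simp
        qed
        show "{0} \<subseteq> radical_on B (span (W_gens \<sigma> p w e f))"
          using B0 span_zero by (auto simp: radical_on_def)
      qed
      then show ?thesis using False by simp
    next
      case True
      have two: "(2::'a) = 0" using of_nat_CHAR[where 'a='a] True by simp
      define S where "S = insert u (\<phi> ` Is 1 \<sigma>)"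
      have uni: "u \<notin> \<phi> ` Is 1 \<sigma>"
      proof
        assume "u \<in> \<phi> ` Is 1 \<sigma>"
        then obtain k0 where k0: "k0 \<in> Is 1 \<sigma>" "u = \<phi> k0" by auto
        define c where "c = (\<lambda>k. if k = k0 then (1::'a) else 0)"
        have "(\<Sum>k\<in>Is 1 \<sigma>. scale (c k) (\<phi> k)) = (\<Sum>k\<in>Is 1 \<sigma>. if k = k0 then \<phi> k else 0)"
          by (rule sum.cong) (auto simp: c_def)
        also have "\<dots> = \<phi> k0" using k0(1) finIs by (simp add: sum.delta')
        finally have sc: "(\<Sum>k\<in>Is 1 \<sigma>. scale (c k) (\<phi> k)) = u" using k0(2) by simp
        have "c k0 = 0"
          by (rule radz[OF order_refl order_refl _ k0(1)]) (use Buk sc in \<open>simp add: One_nat_def\<close>)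
        then show False by (simp add: c_def)
      qed
      have inj: "inj_on \<phi> (Is 1 \<sigma>)"
      proof (rule inj_onI, rule ccontr)
        fix k1 k2 assume k: "k1 \<in> Is 1 \<sigma>" "k2 \<in> Is 1 \<sigma>" "\<phi> k1 = \<phi> k2" "k1 \<noteq> k2"
        define c where "c = (\<lambda>k. if k = k1 then (1::'a) else if k = k2 then -1 else 0)"
        have "\<And>k. scale (c k) (\<phi> k) = (if k = k1 then \<phi> k else 0) + (if k = k2 then - \<phi> k else 0)"
          using k(4) by (auto simp: c_def)
        then have "(\<Sum>k\<in>Is 1 \<sigma>. scale (c k) (\<phi> k))
            = (\<Sum>k\<in>Is 1 \<sigma>. if k = k1 then \<phi> k else 0) + (\<Sum>k\<in>Is 1 \<sigma>. if k = k2 then - \<phi> k else 0)"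
          by (simp add: sum.distrib)
        also have "\<dots> = 0" using k finIs by (simp add: sum.delta')
        finally have sc: "(\<Sum>k\<in>Is 1 \<sigma>. scale (c k) (\<phi> k)) = 0" .
        have "c k1 = 0"
          by (rule radz[OF order_refl order_refl _ k(1)]) (use sc B0 in \<open>simp add: One_nat_def\<close>)
        then show False by (simp add: c_def)
      qed
      have finS: "finite S" by (simp add: S_def finIs)
      have indS: "independent S"
      proof (rule independent_if_scalars_zero[OF finS])
        fix h v assume hs: "(\<Sum>x\<in>S. scale (h x) x) = 0" and v: "v \<in> S"
        have "(\<Sum>x\<in>S. scale (h x) x) = scale (h u) u + (\<Sum>x\<in>\<phi> ` Is 1 \<sigma>. scale (h x) x)"
          unfolding S_def using uni finIs by simp
        also have "(\<Sum>x\<in>\<phi> ` Is 1 \<sigma>. scale (h x) x) = (\<Sum>k\<in>Is 1 \<sigma>. scale (h (\<phi> k)) (\<phi> k))"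
          using sum.reindex[OF inj, of "\<lambda>x. scale (h x) x"] by (simp add: comp_def)
        finally have eq0: "scale (h u) u + (\<Sum>k\<in>Is 1 \<sigma>. scale (h (\<phi> k)) (\<phi> k)) = 0" using hs by simp
        have hk: "h (\<phi> k) = 0" if "k \<in> Is 1 \<sigma>" for k
        proof (rule radz[OF order_refl order_refl _ that, where c="\<lambda>k. h (\<phi> k)"])
          fix m assume m: "m \<in> Is 1 \<sigma>"
          have "B (scale (h u) u + (\<Sum>k\<in>Is 1 \<sigma>. scale (h (\<phi> k)) (\<phi> k))) (\<phi> m) = 0"
            using eq0 B0 by simp
          then show "B (\<Sum>k\<in>Is 1 \<sigma>. scale (h (\<phi> k)) (\<phi> k)) (\<phi> m) = 0" using Bdec[OF m] by simp
        qed
        then have "(\<Sum>k\<in>Is 1 \<sigma>. scale (h (\<phi> k)) (\<phi> k)) = 0" by simp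
        then have "h u = 0" using eq0 u0 by simp
        then show "h v = 0" using v hk unfolding S_def by auto
      qed
      have cardS: "card S = N"
      proof -
        have "card (Is 1 \<sigma>) = (\<Sum>t\<in>{1..\<sigma>}. 2 * p t)" by (simp add: Is_def)
        also have "\<dots> = 2 * ((N - 1) div 2)" using psum k1 by (simp add: sum_distrib_left[symmetric])
        also have "\<dots> = N - 1" using even k1 by simp
        finally have "card (Is 1 \<sigma>) = N - 1" .
        then have "card (\<phi> ` Is 1 \<sigma>) = N - 1" using card_image[OF inj] by simp
        then show ?thesis using uni finIs N3 by (simp add: S_def)
      qed
      have full: "span S = UNIV"
      proof (rule ccontr)
        assume "span S \<noteq> UNIV"
        then obtain z where z: "z \<notin> span S" by auto
        have zS: "z \<notin> S" using z span_superset by blast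
        have ind2: "independent (insert z S)" by (rule independent_insertI[OF z indS])
        obtain Bs where Bs: "independent Bs" "UNIV \<subseteq> span Bs" "card Bs = dim (UNIV::'b set)"
          using basis_exists[of UNIV] by blast
        have finB: "finite Bs" using Bs(3) dim N3 by (intro card_ge_0_finite) simp
        have "card (insert z S) \<le> card Bs" using independent_span_bound[OF finB ind2] Bs by auto
        moreover have "card (insert z S) = N + 1" using zS cardS finS by simp
        ultimately show False using Bs(3) dim by simp
      qed
      have uperp: "u \<in> Vperp B"
      proof -
        have "B u z = 0" for z
        proof -
          have "z \<in> span (insert u (\<phi> ` Is 1 \<sigma>))" using full by (simp add: S_def)
          then obtain s c where zc: "z = scale s u + (\<Sum>k\<in>Is 1 \<sigma>. scale (c k) (\<phi> k))"
            using decomp by blast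
          have "B u (\<Sum>k\<in>Is 1 \<sigma>. scale (c k) (\<phi> k)) = (\<Sum>k\<in>Is 1 \<sigma>. c k * B u (\<phi> k))"
            by (rule lin_sum[OF linR finIs])
          also have "\<dots> = 0" using Buk by simp
          finally show ?thesis using zc Buu two by (simp add: BaddR BscR)
        qed
        then show ?thesis by (simp add: Vperp_def)
      qed
      have Vsub: "\<exists>s. x = scale s u" if x: "x \<in> Vperp B" for x
      proof -
        have "x \<in> span (insert u (\<phi> ` Is 1 \<sigma>))" using full by (simp add: S_def)
        then obtain s c where xc: "x = scale s u + (\<Sum>k\<in>Is 1 \<sigma>. scale (c k) (\<phi> k))"
          using decomp by blast
        have "c k = 0" if "k \<in> Is 1 \<sigma>" for k
        proof (rule radz[OF order_refl order_refl _ that])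
          fix m assume m: "m \<in> Is 1 \<sigma>"
          have "B x (\<phi> m) = 0" using x by (simp add: Vperp_def)
          then show "B (\<Sum>k\<in>Is 1 \<sigma>. scale (c k) (\<phi> k)) (\<phi> m) = 0" using Bdec[OF m] xc by simp
        qed
        then show ?thesis using xc by auto
      qed
      have scperp: "scale s u \<in> Vperp B" for s using uperp by (simp add: Vperp_def BscL)
      have "radical_on B (span (W_gens \<sigma> p w e f)) = Vperp B"
      proof
        show "radical_on B (span (W_gens \<sigma> p w e f)) \<subseteq> Vperp B"
        proof
          fix x assume x: "x \<in> radical_on B (span (W_gens \<sigma> p w e f))"
          then have xs: "x \<in> span (insert u (\<phi> ` Is e \<sigma>))"
            and xB: "\<And>y. y \<in> span (insert u (\<phi> ` Is e \<sigma>)) \<Longrightarrow> B x y = 0"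
            by (auto simp: radical_on_def Wg)
          obtain s c where xc: "x = scale s u + (\<Sum>k\<in>Is e \<sigma>. scale (c k) (\<phi> k))"
            using decomp[OF xs] by blast
          have "c k = 0" if "k \<in> Is e \<sigma>" for k
          proof (rule radz[OF ef(1) order_refl _ that])
            fix m assume m: "m \<in> Is e \<sigma>"
            have "B x (\<phi> m) = 0" by (rule xB, rule span_base) (use m in auto)
            moreover have "m \<in> Is 1 \<sigma>" using IsSub[OF ef(1) order_refl] m by auto
            ultimately show "B (\<Sum>k\<in>Is e \<sigma>. scale (c k) (\<phi> k)) (\<phi> m) = 0" using Bdec xc by simp
          qed
          then have "x = scale s u" using xc by simp
          then show "x \<in> Vperp B" using scperp by simp
        qed
        show "Vperp B \<subseteq> radical_on B (span (W_gens \<sigma> p w e f))"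
        proof
          fix x assume x: "x \<in> Vperp B"
          then obtain s where xs: "x = scale s u" using Vsub by blast
          have "scale s u \<in> span (W_gens \<sigma> p w e f)" unfolding Wg by (intro span_scale span_base) simp
          then show "x \<in> radical_on B (span (W_gens \<sigma> p w e f))"
            using x xs by (auto simp: radical_on_def Vperp_def)
        qed
      qed
      then show ?thesis using True k1 f1 by simp
    qed
  qed
qed

end

theorem mainTheorem4:
  fixes scale :: "'k::field \<Rightarrow> 'v::ab_group_add \<Rightarrow> 'v"
    and B :: "'v \<Rightarrow> 'v \<Rightarrow> 'k" and Q :: "'v \<Rightarrow> 'k"
    and N \<kappa> \<sigma> :: nat and p :: "nat \<Rightarrow> nat"
    and g :: "'v \<Rightarrow> 'v" and w :: "nat \<Rightarrow> int \<Rightarrow> 'v" and e f :: nat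
  assumes vs: "vector_space scale"
    and fin: "\<exists>S. finite S \<and> module.span scale S = UNIV"
    and dim: "vector_space.dim scale (UNIV :: 'v set) = N" and N3: "N \<ge> 3"
    and algc: "alg_closed TYPE('k)"
    and bil: "bilinear_form scale B" and quad: "quadratic_form scale Q"
    and cases: "(Q = (\<lambda>_. 0) \<and> (\<forall>x. B x x = 0) \<and> Vperp B = {0}) \<or>
                (Q \<noteq> (\<lambda>_. 0) \<and> (\<forall>x y. B x y = Q (x + y) - Q x - Q y) \<and> inj_on Q (Vperp B))"
    and kappa: "\<kappa> \<in> {0, 1}" and even: "even (N - \<kappa>)"
    and pdec: "\<forall>t\<in>{1..<\<sigma>}. p (t + 1) \<le> p t"
    and ppos: "\<forall>t\<in>{1..\<sigma>}. p t \<ge> 1"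
    and psum: "(\<Sum>t\<in>{1..\<sigma>}. p t) = (N - \<kappa>) div 2"
    and iso: "isometry scale B Q g"
    and adp: "adapted B Q g \<sigma> \<kappa> p w"
    and ef: "1 \<le> e" "e \<le> f" "f \<le> \<sigma> + \<kappa>"
    and stable: "g ` module.span scale (W_gens \<sigma> p w e f) \<subseteq> module.span scale (W_gens \<sigma> p w e f)"
  shows "radical_on B (module.span scale (W_gens \<sigma> p w e f)) =
           (if \<kappa> = 1 \<and> f = \<sigma> + 1 \<and> CHAR('k) = 2 then Vperp B else {0})"
    using vector_space.main_vs[OF vs dim N3 bil quad cases kappa even pdec psum adp ef] .

end
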